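(* Let $J$ be a positive integer, $\Delta>0$, and $w_j=(j-\tfrac12)\Delta$ for $j=1,\dots,J$. For $x\in(0,1]$, $w\in\mathbb R$ and $j\in\{1,\dots,J\}$ define $\tau(x,w,j)\in\mathbb R^2$ by $$\tau(x,w,j)=\left[\cos(w\ln x)\sqrt{2x\int_{(j-1)\Delta}^{j\Delta}\rho(w')dw'},\ \sin(w\ln x)\sqrt{2x\int_{(j-1)\Delta}^{j\Delta}\rho(w')dw'}\right].$$ Then for all $x,y\in(0,1]$, $$\left|\int_{-\Delta J}^{\Delta J}\Phi_w(x)^*\Phi_w(y)\,dw-\left\langle\bigoplus_{j=1}^J\tau(x,w_j,j),\ \bigoplus_{j=1}^J\tau(y,w_j,j)\right\rangle\right|\le 2\Delta,$$ where $\bigoplus$ denotes concatenation of vectors and $\langle\cdot,\cdot\rangle$ the Euclidean inner product.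
   Context: $\rho(w)=\frac{2\,\mathrm{sech}(\pi w)}{1+4w^2}$; $\Phi_w(x)=e^{-iw\ln x}\sqrt{x\rho(w)}$; ${}^*$ denotes complex conjugation. *)

theory Defs
  imports "HOL-Analysis.Analysis"
begin

definition rho :: "real \<Rightarrow> real" where
  "rho w = 2 * (1 / cosh (pi * w)) / (1 + 4 * w^2)"

definition Phi :: "real \<Rightarrow> real \<Rightarrow> complex" where
  "Phi w x = exp (- \<i> * complex_of_real (w * ln x)) * complex_of_real (sqrt (x * rho w))"

definition tau :: "real \<Rightarrow> real \<Rightarrow> real \<Rightarrow> nat \<Rightarrow> real \<times> real" where
  "tau \<Delta> x w j =
     (let s = sqrt (2 * x * integral {(real j - 1) * \<Delta> .. real j * \<Delta>} rho)
      in (cos (w * ln x) * s, sin (w * ln x) * s))"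

definition tau_concat :: "real \<Rightarrow> nat \<Rightarrow> real \<Rightarrow> real list" where
  "tau_concat \<Delta> J x =
     concat (map (\<lambda>j. let v = tau \<Delta> x ((real j - 1/2) * \<Delta>) j in [fst v, snd v]) [1..<J+1])"

definition list_inner :: "real list \<Rightarrow> real list \<Rightarrow> real" where
  "list_inner u v = sum_list (map2 (*) u v)"

end

theory Submission
  imports Defs
begin

lemma rho_pos: "rho w > 0"
  unfolding rho_def by (intro divide_pos_pos mult_pos_pos) (auto intro: add_pos_nonneg)

lemma rho_even: "rho (-w) = rho w"
  unfolding rho_def by simp

lemma rho_cont: "continuous_on S rho"
  unfolding rho_def by (intro continuous_intros) (auto simp: add_pos_nonneg intro!: order.strict_implies_not_eq[symmetric])

lemma rho_le: "rho w \<le> 2 / (1 + 4 * w^2)"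
proof -
  have "2 * (1 / cosh (pi * w)) \<le> 2" using cosh_real_ge_1[of "pi*w"] by (simp add: divide_le_eq)
  then show ?thesis unfolding rho_def
    by (intro divide_right_mono) (auto intro: add_nonneg_nonneg)
qed

lemma cos_lip: "\<bar>cos a - cos b\<bar> \<le> \<bar>a - b\<bar>" for a b :: real
proof -
  have "\<bar>cos a - cos b\<bar> = 2 * \<bar>sin ((a + b) / 2)\<bar> * \<bar>sin ((b - a) / 2)\<bar>"
    by (simp add: cos_diff_cos abs_mult)
  also have "\<dots> \<le> 2 * 1 * \<bar>(b - a) / 2\<bar>"
    by (intro mult_mono abs_sin_x_le_abs_x) auto
  finally show ?thesis by simp
qed

lemma sqrt_ln_le: assumes "t > 0" "t \<le> 1" shows "sqrt t * (- ln t) \<le> 1"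
proof -
  define u where "u = - ln t / 2"
  have u0: "u \<ge> 0" using assms by (simp add: u_def)
  have "sqrt t = exp (-u)"
    using assms by (simp add: u_def sqrt_def exp_ln root_powr_inverse ln_sqrt powr_def)
  then have "sqrt t * (- ln t) = 2 * u * exp (-u)" by (simp add: u_def)
  also have "\<dots> \<le> 1"
  proof -
    have "1 + u + u^2/2 \<le> exp u" using exp_lower_Taylor_quadratic[of u] u0 by simp
    then have "2 * u \<le> exp u" proof -
      have "0 \<le> (u - 1)^2" by simp
      then show ?thesis using \<open>1 + u + u^2/2 \<le> exp u\<close> by (simp add: power2_eq_square algebra_simps)
    qed
    then show ?thesis by (simp add: exp_minus field_simps)
  qed
  finally show ?thesis .
qed

lemma arctan_has_int: "((\<lambda>w. 2 / (1 + 4 * w^2)) has_integral (arctan (2*b) - arctan (2*a))) {a..b}"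
  if "a \<le> b" for a b :: real
proof -
  have "((\<lambda>w. arctan (2*w)) has_vector_derivative 2 / (1 + 4 * w^2)) (at w within {a..b})" for w
  proof -
    have "((\<lambda>w. arctan (2*w)) has_real_derivative inverse (1 + (2*w)^2) * 2) (at w within {a..b})"
      by (rule DERIV_chain2[OF DERIV_arctan]) (auto intro!: derivative_eq_intros)
    then show ?thesis by (simp add: has_real_derivative_iff_has_vector_derivative[symmetric] field_simps power2_eq_square)
  qed
  then show ?thesis using that by (intro fundamental_theorem_of_calculus) auto
qed

lemma int_rho_le: assumes "0 \<le> b" shows "integral {0..b} rho \<le> 2"
proof -
  have "integral {0..b} rho \<le> integral {0..b} (\<lambda>w. 2 / (1 + 4 * w^2))"
    using rho_le arctan_has_int[OF assms]
    by (intro integral_le integrable_continuous_real[OF rho_cont]) (auto intro: has_integral_integrable)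
  also have "\<dots> = arctan (2*b)" using arctan_has_int[OF assms] by (simp add: integral_unique)
  also have "\<dots> \<le> 2" using arctan_bounded[of "2*b"] pi_less_4 by linarith
  finally show ?thesis .
qed

lemma li_concat:
  "list_inner (concat (map (\<lambda>j. [a j, b j]) xs)) (concat (map (\<lambda>j. [c j, d j]) xs))
   = (\<Sum>j\<leftarrow>xs. a j * c j + b j * d j)"
  by (induction xs) (auto simp: list_inner_def)

lemma set_upt_eq: "set [1..<J+1] = {1..J}" by auto

lemma inner_formula:
  assumes "x > 0" "y > 0"
  shows "list_inner (tau_concat \<Delta> J x) (tau_concat \<Delta> J y)
     = (\<Sum>j\<in>{1..J}. 2 * sqrt (x*y) * cos (((real j - 1/2) * \<Delta>) * (ln x - ln y))
            * integral {(real j - 1) * \<Delta> .. real j * \<Delta>} rho)" (is "_ = ?rhs")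
proof -
  have "list_inner (tau_concat \<Delta> J x) (tau_concat \<Delta> J y)
     = (\<Sum>j\<leftarrow>[1..<J+1]. fst (tau \<Delta> x ((real j - 1/2) * \<Delta>) j) * fst (tau \<Delta> y ((real j - 1/2) * \<Delta>) j)
          + snd (tau \<Delta> x ((real j - 1/2) * \<Delta>) j) * snd (tau \<Delta> y ((real j - 1/2) * \<Delta>) j))"
    unfolding tau_concat_def Let_def by (rule li_concat)
  also have "\<dots> = (\<Sum>j\<in>{1..J}. fst (tau \<Delta> x ((real j - 1/2) * \<Delta>) j) * fst (tau \<Delta> y ((real j - 1/2) * \<Delta>) j)
          + snd (tau \<Delta> x ((real j - 1/2) * \<Delta>) j) * snd (tau \<Delta> y ((real j - 1/2) * \<Delta>) j))"
    by (simp only: sum_set_upt_conv_sum_list_nat[symmetric] set_upt_eq)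
  also have "\<dots> = ?rhs"
  proof (rule sum.cong[OF refl])
    fix j assume "j \<in> {1..J}"
    define I where "I = integral {(real j - 1) * \<Delta> .. real j * \<Delta>} rho"
    define w where "w = (real j - 1/2) * \<Delta>"
    have I0: "I \<ge> 0" unfolding I_def
      by (rule integral_nonneg[OF integrable_continuous_real[OF rho_cont]]) (auto intro: less_imp_le[OF rho_pos])
    have s: "sqrt (2*x*I) * sqrt (2*y*I) = 2 * sqrt (x*y) * I"
      using I0 assms by (simp add: real_sqrt_mult[symmetric] algebra_simps power2_eq_square[symmetric])
         (simp add: real_sqrt_mult)
    have "fst (tau \<Delta> x w j) * fst (tau \<Delta> y w j) + snd (tau \<Delta> x w j) * snd (tau \<Delta> y w j)
        = (cos (w * ln x) * cos (w * ln y) + sin (w * ln x) * sin (w * ln y)) * (sqrt (2*x*I) * sqrt (2*y*I))"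
      unfolding tau_def Let_def I_def by (simp add: algebra_simps)
    also have "\<dots> = 2 * sqrt (x*y) * cos (w * (ln x - ln y)) * I"
      by (simp add: s cos_diff[symmetric] right_diff_distrib)
    finally show "fst (tau \<Delta> x ((real j - 1/2) * \<Delta>) j) * fst (tau \<Delta> y ((real j - 1/2) * \<Delta>) j)
          + snd (tau \<Delta> x ((real j - 1/2) * \<Delta>) j) * snd (tau \<Delta> y ((real j - 1/2) * \<Delta>) j)
       = 2 * sqrt (x*y) * cos (((real j - 1/2) * \<Delta>) * (ln x - ln y))
            * integral {(real j - 1) * \<Delta> .. real j * \<Delta>} rho"
      by (simp add: w_def I_def)
  qed
  finally show ?thesis .
qed


lemma Phi_prod:
  assumes "x > 0" "y > 0"
  shows "cnj (Phi w x) * Phi w y = complex_of_real (sqrt (x*y) * rho w) * cis (w * (ln x - ln y))"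
proof -
  have r: "sqrt (x * rho w) * sqrt (y * rho w) = sqrt (x*y) * rho w"
    using assms rho_pos[of w] by (simp add: real_sqrt_mult[symmetric] algebra_simps power2_eq_square[symmetric]) (simp add: real_sqrt_mult)
  have "cnj (Phi w x) * Phi w y = complex_of_real (sqrt (x * rho w) * sqrt (y * rho w))
        * (cis (w * ln x) * cis (- (w * ln y)))"
    unfolding Phi_def by (simp add: exp_cnj cis_conv_exp algebra_simps)
  also have "cis (w * ln x) * cis (- (w * ln y)) = cis (w * (ln x - ln y))"
    by (simp add: cis_mult right_diff_distrib)
  finally show ?thesis by (simp add: r)
qed

lemma sym_sum:
  assumes "x > 0" "y > 0"
  shows "cnj (Phi w x) * Phi w y + cnj (Phi (-w) x) * Phi (-w) y
     = complex_of_real (2 * sqrt (x*y) * rho w * cos (w * (ln x - ln y)))"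
  using assms by (simp add: Phi_prod rho_even complex_eq_iff)

lemma Phi_cont: "continuous_on S (\<lambda>w. cnj (Phi w x) * Phi w y)"
  unfolding Phi_def by (intro continuous_intros rho_cont)


lemma integral_sym:
  assumes "x > 0" "y > 0" "a \<ge> 0"
  shows "integral {-a..a} (\<lambda>w. cnj (Phi w x) * Phi w y)
     = complex_of_real (integral {0..a} (\<lambda>w. 2 * sqrt (x*y) * rho w * cos (w * (ln x - ln y))))"
proof -
  let ?f = "\<lambda>w. cnj (Phi w x) * Phi w y"
  let ?g = "\<lambda>w. 2 * sqrt (x*y) * rho w * cos (w * (ln x - ln y))"
  have fi: "?f integrable_on {c..d}" for c d
    by (simp add: integrable_continuous_real Phi_cont)
  have "integral {-a..a} ?f = integral {-a..0} ?f + integral {0..a} ?f"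
    by (rule Henstock_Kurzweil_Integration.integral_combine[symmetric]) (use assms fi in auto)
  also have "integral {-a..0} ?f = integral {0..a} (\<lambda>w. ?f (-w))"
    using Henstock_Kurzweil_Integration.integral_reflect_real[of a 0 "\<lambda>w. ?f (-w)"] by simp
  also have "integral {0..a} (\<lambda>w. ?f (-w)) + integral {0..a} ?f = integral {0..a} (\<lambda>w. ?f w + ?f (-w))"
    by (subst integral_add) (auto intro!: fi integrable_continuous_real continuous_intros Phi_cont
        continuous_on_compose2[OF Phi_cont, where f=uminus])
  also have "\<dots> = integral {0..a} (\<lambda>w. complex_of_real (?g w))"
    using assms by (simp add: sym_sum)
  also have "\<dots> = complex_of_real (integral {0..a} ?g)"
    by (rule integral_unique, rule has_integral_of_real, rule integrable_integral,
        intro integrable_continuous_real continuous_intros rho_cont)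
  finally show ?thesis .
qed


lemma bin_bound:
  fixes K L c d m h :: real
  assumes K: "K \<ge> 0" and hm: "\<And>w. w \<in> {c..d} \<Longrightarrow> \<bar>w - m\<bar> \<le> h"
  shows "\<bar>integral {c..d} (\<lambda>w. 2*K*rho w*cos (w*L)) - 2*K*cos (m*L)*integral {c..d} rho\<bar>
         \<le> 2*K*\<bar>L\<bar>*h*integral {c..d} rho"
proof -
  have ri: "rho integrable_on {c..d}" by (rule integrable_continuous_real[OF rho_cont])
  have gi: "(\<lambda>w. 2*K*rho w*cos (w*L)) integrable_on {c..d}"
    by (intro integrable_continuous_real continuous_intros rho_cont)
  have nb: "norm (integral {c..d} (\<lambda>w. 2*K*rho w*cos (w*L) - 2*K*cos (m*L)*rho w)) \<le> integral {c..d} (\<lambda>w. 2*K*\<bar>L\<bar>*h*rho w)"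
  proof (rule integral_norm_bound_integral)
    show "(\<lambda>w. 2*K*rho w*cos (w*L) - 2*K*cos (m*L)*rho w) integrable_on {c..d}"
      by (intro integrable_continuous_real continuous_intros rho_cont)
    show "(\<lambda>w. 2*K*\<bar>L\<bar>*h*rho w) integrable_on {c..d}"
      by (intro integrable_continuous_real continuous_intros rho_cont)
    fix w assume w: "w \<in> {c..d}"
    have "\<bar>cos (w*L) - cos (m*L)\<bar> \<le> \<bar>L\<bar> * h"
      using cos_lip[of "w*L" "m*L"] hm[OF w]
    proof -
      have "\<bar>w*L - m*L\<bar> = \<bar>L\<bar> * \<bar>w - m\<bar>" by (simp add: abs_mult flip: left_diff_distrib)
      also have "\<dots> \<le> \<bar>L\<bar> * h" using hm[OF w] by (intro mult_left_mono) auto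
      finally show ?thesis using cos_lip[of "w*L" "m*L"] by linarith
    qed
    then have "2*K*rho w*\<bar>cos (w*L) - cos (m*L)\<bar> \<le> 2*K*rho w*(\<bar>L\<bar> * h)"
      using K rho_pos[of w] by (intro mult_left_mono) auto
    moreover have "\<bar>2*K*rho w*cos (w*L) - 2*K*cos (m*L)*rho w\<bar> = 2*K*rho w*\<bar>cos (w*L) - cos (m*L)\<bar>"
    proof -
      have "2*K*rho w*cos (w*L) - 2*K*cos (m*L)*rho w = (2*K*rho w)*(cos (w*L) - cos (m*L))"
        by (simp add: algebra_simps)
      then show ?thesis using K rho_pos[of w] by (simp add: abs_mult)
    qed
    ultimately show "norm (2*K*rho w*cos (w*L) - 2*K*cos (m*L)*rho w) \<le> 2*K*\<bar>L\<bar>*h*rho w"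
      by (simp add: algebra_simps)
  qed
  have eq: "integral {c..d} (\<lambda>w. 2*K*rho w*cos (w*L)) - 2*K*cos (m*L)*integral {c..d} rho
      = integral {c..d} (\<lambda>w. 2*K*rho w*cos (w*L) - 2*K*cos (m*L)*rho w)"
  proof -
    have "integral {c..d} (\<lambda>w. 2*K*rho w*cos (w*L) - 2*K*cos (m*L)*rho w)
        = integral {c..d} (\<lambda>w. 2*K*rho w*cos (w*L)) - integral {c..d} (\<lambda>w. 2*K*cos (m*L)*rho w)"
      by (rule Henstock_Kurzweil_Integration.integral_diff[OF gi])
         (intro integrable_continuous_real continuous_intros rho_cont)
    moreover have "2*K*cos (m*L)*integral {c..d} rho = integral {c..d} (\<lambda>w. 2*K*cos (m*L)*rho w)"
      by (rule Henstock_Kurzweil_Integration.integral_mult[OF ri])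
    ultimately show ?thesis by linarith
  qed
  have "\<bar>integral {c..d} (\<lambda>w. 2*K*rho w*cos (w*L)) - 2*K*cos (m*L)*integral {c..d} rho\<bar>
      = \<bar>integral {c..d} (\<lambda>w. 2*K*rho w*cos (w*L) - 2*K*cos (m*L)*rho w)\<bar>" by (simp only: eq)
  also have "\<dots> \<le> integral {c..d} (\<lambda>w. 2*K*\<bar>L\<bar>*h*rho w)"
    using nb by simp

  also have "\<dots> = 2*K*\<bar>L\<bar>*h*integral {c..d} rho"
    by (rule Henstock_Kurzweil_Integration.integral_mult[OF ri, symmetric])
  finally show ?thesis .
qed


lemma induct_bound:
  fixes K L \<Delta> :: real
  assumes K: "K \<ge> 0" and D: "\<Delta> > 0"
  shows "\<bar>integral {0..real n * \<Delta>} (\<lambda>w. 2*K*rho w*cos (w*L))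
          - (\<Sum>j\<in>{1..n}. 2*K*cos (((real j - 1/2) * \<Delta>) * L) * integral {(real j - 1) * \<Delta> .. real j * \<Delta>} rho)\<bar>
         \<le> K*\<bar>L\<bar>*\<Delta>*integral {0..real n * \<Delta>} rho"
proof (induction n)
  case 0
  then show ?case by simp
next
  case (Suc n)
  let ?g = "\<lambda>w. 2*K*rho w*cos (w*L)"
  let ?S = "\<lambda>n. (\<Sum>j\<in>{1..n}. 2*K*cos (((real j - 1/2) * \<Delta>) * L) * integral {(real j - 1) * \<Delta> .. real j * \<Delta>} rho)"
  have c: "real (Suc n) - 1 = real n" by simp
  have g1: "integral {0..real (Suc n) * \<Delta>} ?g = integral {0..real n * \<Delta>} ?g + integral {real n * \<Delta>..real (Suc n) * \<Delta>} ?g"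
    by (rule Henstock_Kurzweil_Integration.integral_combine[symmetric])
       (use D in \<open>auto intro!: integrable_continuous_real continuous_intros rho_cont mult_nonneg_nonneg\<close>)
  have r1: "integral {0..real (Suc n) * \<Delta>} rho = integral {0..real n * \<Delta>} rho + integral {real n * \<Delta>..real (Suc n) * \<Delta>} rho"
    by (rule Henstock_Kurzweil_Integration.integral_combine[symmetric])
       (use D in \<open>auto intro!: integrable_continuous_real rho_cont mult_nonneg_nonneg\<close>)
  have s1: "?S (Suc n) = ?S n + 2*K*cos (((real (Suc n) - 1/2) * \<Delta>) * L) * integral {real n * \<Delta> .. real (Suc n) * \<Delta>} rho"
    by (simp add: c)
  have b: "\<bar>integral {real n * \<Delta>..real (Suc n) * \<Delta>} ?g - 2*K*cos (((real (Suc n) - 1/2) * \<Delta>) * L) * integral {real n * \<Delta> .. real (Suc n) * \<Delta>} rho\<bar>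
     \<le> 2*K*\<bar>L\<bar>*(\<Delta>/2)*integral {real n * \<Delta> .. real (Suc n) * \<Delta>} rho"
    by (rule bin_bound[OF K]) (auto simp: algebra_simps abs_if)
  show ?case
    unfolding g1 r1 s1 using Suc.IH b by (simp add: algebra_simps abs_le_iff)
qed


lemma KL_le: assumes "x \<in> {0<..1}" "y \<in> {0<..1}" shows "sqrt (x*y) * \<bar>ln x - ln y\<bar> \<le> 1"
proof -
  have *: "sqrt (x*y) * \<bar>ln x - ln y\<bar> \<le> 1" if "0 < x" "x \<le> y" "y \<le> 1" for x y :: real
  proof -
    have "sqrt (x*y) \<le> sqrt x" using that by (simp add: real_sqrt_mult mult_left_le)
    moreover have "\<bar>ln x - ln y\<bar> \<le> - ln x" using that by (simp add: abs_if)
    ultimately have "sqrt (x*y) * \<bar>ln x - ln y\<bar> \<le> sqrt x * (- ln x)"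
      using that by (intro mult_mono) auto
    also have "\<dots> \<le> 1" using sqrt_ln_le that by simp
    finally show ?thesis .
  qed
  show ?thesis
  proof (cases "x \<le> y")
    case True then show ?thesis using * assms by auto
  next
    case False then show ?thesis using *[of y x] assms by (auto simp: mult.commute abs_minus_commute)
  qed
qed

theorem lemma5:
  fixes J :: nat and \<Delta> x y :: real
  assumes "J > 0" and "\<Delta> > 0"
    and "x \<in> {0<..1}" and "y \<in> {0<..1}"
  shows "cmod (integral {- \<Delta> * real J .. \<Delta> * real J} (\<lambda>w. cnj (Phi w x) * Phi w y)
               - complex_of_real (list_inner (tau_concat \<Delta> J x) (tau_concat \<Delta> J y)))
         \<le> 2 * \<Delta>"
proof -
  have x: "x > 0" and y: "y > 0" using assms by auto
  define K where "K = sqrt (x*y)"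
  define L where "L = ln x - ln y"
  have K: "K \<ge> 0" using x y by (simp add: K_def)
  have e1: "integral {- \<Delta> * real J .. \<Delta> * real J} (\<lambda>w. cnj (Phi w x) * Phi w y)
     = complex_of_real (integral {0..real J * \<Delta>} (\<lambda>w. 2*K*rho w*cos (w*L)))"
    using integral_sym[OF x y, of "\<Delta> * real J"] assms by (simp add: K_def L_def mult.commute)
  have e2: "list_inner (tau_concat \<Delta> J x) (tau_concat \<Delta> J y)
     = (\<Sum>j\<in>{1..J}. 2*K*cos (((real j - 1/2) * \<Delta>) * L) * integral {(real j - 1) * \<Delta> .. real j * \<Delta>} rho)"
    using inner_formula[OF x y] by (simp add: K_def L_def)
  have "cmod (integral {- \<Delta> * real J .. \<Delta> * real J} (\<lambda>w. cnj (Phi w x) * Phi w y)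
               - complex_of_real (list_inner (tau_concat \<Delta> J x) (tau_concat \<Delta> J y)))
     = \<bar>integral {0..real J * \<Delta>} (\<lambda>w. 2*K*rho w*cos (w*L))
          - (\<Sum>j\<in>{1..J}. 2*K*cos (((real j - 1/2) * \<Delta>) * L) * integral {(real j - 1) * \<Delta> .. real j * \<Delta>} rho)\<bar>"
    unfolding e1 e2 by (simp only: of_real_diff[symmetric] norm_of_real)
  also have "\<dots> \<le> (K*\<bar>L\<bar>)*\<Delta>*integral {0..real J * \<Delta>} rho"
    using induct_bound[OF K assms(2)] by simp
  also have "\<dots> \<le> 1 * \<Delta> * 2"
  proof (intro mult_mono)
    show "K*\<bar>L\<bar> \<le> 1" using KL_le[OF assms(3,4)] by (simp add: K_def L_def)
    show "integral {0..real J * \<Delta>} rho \<le> 2" using assms by (intro int_rho_le) simp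
    show "0 \<le> integral {0..real J * \<Delta>} rho"
      by (rule integral_nonneg[OF integrable_continuous_real[OF rho_cont]]) (auto intro: less_imp_le[OF rho_pos])
  qed (use assms K in auto)
  finally show ?thesis by simp
qed

end
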